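(* Let $m\ge1$ be an integer, $\Gamma_1,\Gamma_2$ co-prime integers with $1<\Gamma_1<\Gamma_2$, $m_1=m\Gamma_1$, $m_2=m\Gamma_2$, and let $1\le j\le K+1$. Let $N$ be an integer with $0\le N<\min\big(m_2(1+\ddot n_{2,j}),\,m_1(1+\ddot n_{1,j})\big)$, with remainders $r_i=|N|_{m_i}$, and let $\tilde r_1,\tilde r_2$ be erroneous remainders whose errors satisfy $$-\frac{\sigma_j}{2}\le\frac{\Delta r_1-\Delta r_2}{m}<\frac{\sigma_j}{2}.$$ Let $\mathbf q_{21}=(\tilde r_1-\tilde r_2)/m$. Then: (1) if $\mathbf q_{21}\ge\sigma_j/2$, then $r_1>r_2$; (2) if $\mathbf q_{21}<-\sigma_j/2$, then $r_1<r_2$; (3) if $-\sigma_j/2\le\mathbf q_{21}<\sigma_j/2$, then $r_1=r_2$.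
   Context: $|a|_b$ is the remainder of the integer $a$ modulo the positive integer $b$. Erroneous remainders are integers $\tilde r_i$ with $0\le\tilde r_i<m_i$, errors $\Delta r_i=\tilde r_i-r_i$. Euclidean sequence: $\sigma_{-1}=\Gamma_2$, $\sigma_0=\Gamma_1$, $\sigma_i=|\sigma_{i-2}|_{\sigma_{i-1}}$ for $i\ge1$; $K\ge0$ is the index with $\sigma_K>1$ and $\sigma_{K+1}=1$. For $1\le n<\Gamma_1$, $S_{2,n}=\{|t\Gamma_2|_{\Gamma_1}: 0\le t\le n\}$ and $d_{2,n}$ is the minimum distance between two distinct elements of $S_{2,n}$; for $1\le n<\Gamma_2$, $S_{1,n}=\{|t\Gamma_1|_{\Gamma_2}: 0\le t\le n\}$ and $d_{1,n}$ is defined likewise. $\ddot n_{2,j}=\max\{n:1\le n<\Gamma_1,\ d_{2,n}\ge\sigma_j\}$, $\ddot n_{1,j}=\max\{n:1\le n<\Gamma_2,\ d_{1,n}\ge\sigma_j\}$. *)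

theory Defs
  imports Complex_Main
begin

(* Euclidean sequence: eucl G1 G2 k = sigma_{k-1}, i.e.
   eucl 0 = sigma_{-1} = G2, eucl 1 = sigma_0 = G1,
   eucl (k+2) = |eucl k|_{eucl (k+1)}. *)
fun eucl :: "int \<Rightarrow> int \<Rightarrow> nat \<Rightarrow> int" where
  "eucl G1 G2 0 = G2"
| "eucl G1 G2 (Suc 0) = G1"
| "eucl G1 G2 (Suc (Suc k)) = eucl G1 G2 k mod eucl G1 G2 (Suc k)"

definition sigma :: "int \<Rightarrow> int \<Rightarrow> nat \<Rightarrow> int" where
  "sigma G1 G2 i = eucl G1 G2 (Suc i)"

definition Kidx :: "int \<Rightarrow> int \<Rightarrow> nat" where
  "Kidx G1 G2 = (THE k. sigma G1 G2 k > 1 \<and> sigma G1 G2 (Suc k) = 1)"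

definition Sset :: "int \<Rightarrow> int \<Rightarrow> nat \<Rightarrow> int set" where
  "Sset a b n = {(int t * a) mod b | t. t \<le> n}"

definition mindist :: "int set \<Rightarrow> int" where
  "mindist A = Min {\<bar>x - y\<bar> | x y. x \<in> A \<and> y \<in> A \<and> x \<noteq> y}"

(* ddot a b s = max { n : 1 <= n < b, d(S a b n) >= s } ;
   ddot_{2,j} = ddot G2 G1 sigma_j, ddot_{1,j} = ddot G1 G2 sigma_j *)
definition ddot :: "int \<Rightarrow> int \<Rightarrow> int \<Rightarrow> nat" where
  "ddot a b s = Max {n. 1 \<le> n \<and> int n < b \<and> mindist (Sset a b n) \<ge> s}"

end

theory Submission
  imports Defs
begin

lemma Sset_finite: "finite (Sset a b n)"
proof -
  have "Sset a b n = (\<lambda>t. (int t * a) mod b) ` {..n}" unfolding Sset_def by auto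
  thus ?thesis by simp
qed

lemma mindist_le:
  assumes "finite A" "x \<in> A" "y \<in> A" "x \<noteq> y"
  shows "mindist A \<le> \<bar>x - y\<bar>"
proof -
  have "{\<bar>x - y\<bar> | x y. x \<in> A \<and> y \<in> A \<and> x \<noteq> y} \<subseteq> (\<lambda>(x,y). \<bar>x - y\<bar>) ` (A \<times> A)"
    by auto
  hence "finite {\<bar>x - y\<bar> | x y. x \<in> A \<and> y \<in> A \<and> x \<noteq> y}"
    using assms(1) by (meson finite_SigmaI finite_imageI finite_subset)
  thus ?thesis unfolding mindist_def using assms by (intro Min_le) auto
qed

lemma Sset_1: "Sset a b 1 = {0, a mod b}"
  unfolding Sset_def
proof (intro set_eqI iffI)
  fix x assume "x \<in> {int t * a mod b |t. t \<le> 1}"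
  then obtain t where "x = int t * a mod b" "t \<le> 1" by auto
  thus "x \<in> {0, a mod b}" by (cases t) auto
next
  fix x assume "x \<in> {0, a mod b}"
  then show "x \<in> {int t * a mod b |t. t \<le> 1}"
  proof
    assume "x = 0" thus ?thesis by (intro CollectI exI[of _ 0]) auto
  next
    assume "x \<in> {a mod b}" thus ?thesis by (intro CollectI exI[of _ 1]) auto
  qed
qed

lemma mindist_pair: assumes "c \<noteq> 0" shows "mindist {0, c} = \<bar>c\<bar>"
proof -
  have "{\<bar>x - y\<bar> | x y. x \<in> {0,c} \<and> y \<in> {0,c} \<and> x \<noteq> y} = {\<bar>c\<bar>}"
  proof (intro set_eqI iffI)
    fix z assume "z \<in> {\<bar>c\<bar>}"
    hence "z = \<bar>c - 0\<bar> \<and> c \<in> {0,c} \<and> (0::int) \<in> {0,c} \<and> c \<noteq> 0" using assms by simp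
    thus "z \<in> {\<bar>x - y\<bar> | x y. x \<in> {0,c} \<and> y \<in> {0,c} \<and> x \<noteq> y}" by blast
  qed (use assms in auto)
  thus ?thesis unfolding mindist_def by simp
qed

lemma ddot_prop:
  assumes "1 < b" "mindist (Sset a b 1) \<ge> s"
  shows "mindist (Sset a b (ddot a b s)) \<ge> s"
proof -
  let ?S = "{n. 1 \<le> n \<and> int n < b \<and> mindist (Sset a b n) \<ge> s}"
  have "?S \<subseteq> {..nat b}" by auto
  hence fin: "finite ?S" by (rule finite_subset) simp
  have "1 \<in> ?S" using assms by auto
  hence "Max ?S \<in> ?S" using fin by (intro Max_in) blast+
  thus ?thesis unfolding ddot_def by simp
qed

lemma eucl_bound: "0 \<le> eucl G1 G2 (Suc (Suc k)) \<and> eucl G1 G2 (Suc (Suc k)) \<le> eucl G1 G2 2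
   \<and> 0 \<le> eucl G1 G2 (Suc (Suc (Suc k))) \<and> eucl G1 G2 (Suc (Suc (Suc k))) \<le> eucl G1 G2 2"
  if "1 < G1" "coprime G1 G2"
proof (induction k)
  case 0
  have e2: "eucl G1 G2 2 = G2 mod G1" by (simp add: numeral_2_eq_2)
  have nz: "G2 mod G1 \<noteq> 0"
  proof
    assume "G2 mod G1 = 0"
    hence "G1 dvd G2" by auto
    hence "is_unit G1" using that(2) by (simp add: coprime_absorb_left)
    thus False using that(1) by auto
  qed
  have "0 \<le> G2 mod G1" using that by simp
  hence pos: "0 < G2 mod G1" using nz by linarith
  have e3: "eucl G1 G2 3 = G1 mod (G2 mod G1)" by (simp add: numeral_3_eq_3)
  have "0 \<le> G1 mod (G2 mod G1)" "G1 mod (G2 mod G1) < G2 mod G1" using pos by simp_all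
  then show ?case using e2 e3 pos by (simp add: numeral_2_eq_2 numeral_3_eq_3 less_imp_le)
next
  case (Suc k)
  have eq: "eucl G1 G2 (Suc (Suc (Suc (Suc k)))) = eucl G1 G2 (Suc (Suc k)) mod eucl G1 G2 (Suc (Suc (Suc k)))"
    by simp
  have "0 \<le> eucl G1 G2 (Suc (Suc (Suc (Suc k)))) \<and> eucl G1 G2 (Suc (Suc (Suc (Suc k)))) \<le> eucl G1 G2 2"
  proof (cases "eucl G1 G2 (Suc (Suc (Suc k))) = 0")
    case True thus ?thesis using eq Suc by simp
  next
    case False
    hence p: "0 < eucl G1 G2 (Suc (Suc (Suc k)))" using Suc by linarith
    have "eucl G1 G2 (Suc (Suc k)) mod eucl G1 G2 (Suc (Suc (Suc k))) < eucl G1 G2 (Suc (Suc (Suc k)))"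
      "0 \<le> eucl G1 G2 (Suc (Suc k)) mod eucl G1 G2 (Suc (Suc (Suc k)))" using p by simp_all
    thus ?thesis using eq Suc by linarith
  qed
  thus ?case using Suc by simp
qed

lemma sigma_le: assumes "1 \<le> j" "1 < G1" "coprime G1 G2"
  shows "sigma G1 G2 j \<le> G2 mod G1"
proof -
  obtain k where k: "j = Suc k" using assms by (cases j) auto
  have "sigma G1 G2 j = eucl G1 G2 (Suc (Suc k))" by (simp add: sigma_def k)
  moreover have "eucl G1 G2 2 = G2 mod G1" by (simp add: numeral_2_eq_2)
  ultimately show ?thesis using eucl_bound[OF assms(2,3), of k] by simp
qed

lemma key:
  fixes G1 G2 n s :: int
  assumes hcop: "coprime G1 G2" and hG: "1 < G1" "G1 < G2"
    and hn: "0 \<le> n" "n < G2 * (1 + int (ddot G2 G1 s))" "n < G1 * (1 + int (ddot G1 G2 s))"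
    and hs: "s \<le> G2 mod G1"
  shows "n mod G1 = n mod G2 \<or> \<bar>n mod G1 - n mod G2\<bar> \<ge> s"
proof -
  have nz: "G2 mod G1 \<noteq> 0"
  proof
    assume "G2 mod G1 = 0"
    hence "G1 dvd G2" by auto
    hence "is_unit G1" using hcop by (simp add: coprime_absorb_left)
    thus False using hG by auto
  qed
  have G1m: "G1 mod G2 = G1" using hG by simp
  have lt: "G2 mod G1 < G1" using hG by simp
  define u where "u = n mod G2"
  define v where "v = n mod G1"
  define t where "t = n div G2"
  define r where "r = n div G1"
  have u: "0 \<le> u" "u < G2" using hG unfolding u_def by simp_all
  have v: "0 \<le> v" "v < G1" using hG unfolding v_def by simp_all
  have nt: "n = G2 * t + u" unfolding t_def u_def by simp
  have nr: "n = G1 * r + v" unfolding r_def v_def by simp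
  have t0: "0 \<le> t" using hn hG unfolding t_def by (simp add: pos_imp_zdiv_nonneg_iff)
  have r0: "0 \<le> r" using hn hG unfolding r_def by (simp add: pos_imp_zdiv_nonneg_iff)
  have tle: "t \<le> int (ddot G2 G1 s)"
  proof -
    have "G2 * t < G2 * (1 + int (ddot G2 G1 s))" using nt u hn by linarith
    hence "t < 1 + int (ddot G2 G1 s)" using hG by (simp add: mult_less_cancel_left)
    thus ?thesis by simp
  qed
  have rle: "r \<le> int (ddot G1 G2 s)"
  proof -
    have "G1 * r < G1 * (1 + int (ddot G1 G2 s))" using nr v hn by linarith
    hence "r < 1 + int (ddot G1 G2 s)" using hG by (simp add: mult_less_cancel_left)
    thus ?thesis by simp
  qed
  consider "v = u" | "v > u" | "v < u" by linarith
  thus ?thesis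
  proof cases
    case 1 thus ?thesis unfolding u_def v_def by simp
  next
    case 2
    have eq: "t * G2 = G1 * r + (v - u)" using nt nr by (simp add: algebra_simps)
    have "(t * G2) mod G1 = v - u"
    proof -
      have "(t * G2) mod G1 = (v - u) mod G1" unfolding eq by simp
      also have "\<dots> = v - u" using 2 u v by simp
      finally show ?thesis .
    qed
    hence inS: "v - u \<in> Sset G2 G1 (ddot G2 G1 s)" unfolding Sset_def
      using tle t0 by (intro CollectI exI[of _ "nat t"]) auto
    have in0: "0 \<in> Sset G2 G1 (ddot G2 G1 s)" unfolding Sset_def
      by (intro CollectI exI[of _ 0]) auto
    have "mindist (Sset G2 G1 1) \<ge> s"
      using Sset_1[of G2 G1] mindist_pair[OF nz] hs by simp
    hence "mindist (Sset G2 G1 (ddot G2 G1 s)) \<ge> s" using ddot_prop hG by simp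
    moreover have "mindist (Sset G2 G1 (ddot G2 G1 s)) \<le> \<bar>(v-u) - 0\<bar>"
      using mindist_le[OF Sset_finite inS in0] 2 by simp
    ultimately show ?thesis unfolding u_def v_def by simp
  next
    case 3
    have eq: "r * G1 = G2 * t + (u - v)" using nt nr by (simp add: algebra_simps)
    have "(r * G1) mod G2 = u - v"
    proof -
      have "(r * G1) mod G2 = (u - v) mod G2" unfolding eq by simp
      also have "\<dots> = u - v" using 3 u v by simp
      finally show ?thesis .
    qed
    hence inS: "u - v \<in> Sset G1 G2 (ddot G1 G2 s)" unfolding Sset_def
      using rle r0 by (intro CollectI exI[of _ "nat r"]) auto
    have in0: "0 \<in> Sset G1 G2 (ddot G1 G2 s)" unfolding Sset_def
      by (intro CollectI exI[of _ 0]) auto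
    have "G1 \<noteq> 0" using hG by simp
    hence "mindist (Sset G1 G2 1) = G1"
      using Sset_1[of G1 G2] mindist_pair[of G1] G1m hG by simp
    hence "mindist (Sset G1 G2 1) \<ge> s" using hs lt by linarith
    hence "mindist (Sset G1 G2 (ddot G1 G2 s)) \<ge> s" using ddot_prop hG by simp
    moreover have "mindist (Sset G1 G2 (ddot G1 G2 s)) \<le> \<bar>(u-v) - 0\<bar>"
      using mindist_le[OF Sset_finite inS in0] 3 by simp
    ultimately show ?thesis unfolding u_def v_def by (simp add: abs_minus_commute)
  qed
qed

theorem lemma7:
  fixes m G1 G2 N rt1 rt2 :: int and j :: nat
  assumes hm: "m \<ge> 1"
    and hcop: "coprime G1 G2"
    and hG: "1 < G1" "G1 < G2"
    and hj: "1 \<le> j" "j \<le> Kidx G1 G2 + 1"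
    and hN: "0 \<le> N"
      "N < min (m * G2 * (1 + int (ddot G2 G1 (sigma G1 G2 j))))
               (m * G1 * (1 + int (ddot G1 G2 (sigma G1 G2 j))))"
    and hrt: "0 \<le> rt1" "rt1 < m * G1" "0 \<le> rt2" "rt2 < m * G2"
    and herr: "- real_of_int (sigma G1 G2 j) / 2
                 \<le> real_of_int ((rt1 - N mod (m * G1)) - (rt2 - N mod (m * G2))) / real_of_int m"
              "real_of_int ((rt1 - N mod (m * G1)) - (rt2 - N mod (m * G2))) / real_of_int m
                 < real_of_int (sigma G1 G2 j) / 2"
  shows "(real_of_int (rt1 - rt2) / real_of_int m \<ge> real_of_int (sigma G1 G2 j) / 2
            \<longrightarrow> N mod (m * G1) > N mod (m * G2))
       \<and> (real_of_int (rt1 - rt2) / real_of_int m < - real_of_int (sigma G1 G2 j) / 2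
            \<longrightarrow> N mod (m * G1) < N mod (m * G2))
       \<and> (- real_of_int (sigma G1 G2 j) / 2 \<le> real_of_int (rt1 - rt2) / real_of_int m
            \<and> real_of_int (rt1 - rt2) / real_of_int m < real_of_int (sigma G1 G2 j) / 2
            \<longrightarrow> N mod (m * G1) = N mod (m * G2))"
proof -
  define s where "s = sigma G1 G2 j"
  define n where "n = N div m"
  define d where "d = n mod G1 - n mod G2"
  have r1: "N mod (m * G1) = m * (n mod G1) + N mod m"
    unfolding n_def using hG by (intro zmod_zmult2_eq) simp
  have r2: "N mod (m * G2) = m * (n mod G2) + N mod m"
    unfolding n_def using hG by (intro zmod_zmult2_eq) simp
  have y: "N mod (m * G1) - N mod (m * G2) = m * d" unfolding d_def r1 r2 by (simp add: algebra_simps)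
  have n0: "0 \<le> n" unfolding n_def using hN hm by (simp add: pos_imp_zdiv_nonneg_iff)
  have Nm: "m * n \<le> N"
  proof -
    have "N mod m \<ge> 0" using hm by simp
    moreover have "m * (N div m) + N mod m = N" by simp
    ultimately show ?thesis unfolding n_def by linarith
  qed
  have n1: "n < G2 * (1 + int (ddot G2 G1 s))"
  proof -
    have "m * n < m * (G2 * (1 + int (ddot G2 G1 s)))" using Nm hN unfolding s_def by (simp add: algebra_simps)
    thus ?thesis using hm by (simp add: mult_less_cancel_left)
  qed
  have n2: "n < G1 * (1 + int (ddot G1 G2 s))"
  proof -
    have "m * n < m * (G1 * (1 + int (ddot G1 G2 s)))" using Nm hN unfolding s_def by (simp add: algebra_simps)
    thus ?thesis using hm by (simp add: mult_less_cancel_left)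
  qed
  have dk: "d = 0 \<or> \<bar>d\<bar> \<ge> s" unfolding d_def
    using key[OF hcop hG n0 n1 n2] sigma_le[OF hj(1) hG(1) hcop] unfolding s_def by auto
  define x where "x = rt1 - rt2"
  define yy where "yy = N mod (m * G1) - N mod (m * G2)"
  have mpos: "real_of_int m > 0" using hm by simp
  have e1: "- real_of_int s * real_of_int m \<le> 2 * real_of_int (x - yy)"
    using herr(1) mpos unfolding s_def x_def yy_def by (simp add: field_simps)
  have e2: "2 * real_of_int (x - yy) < real_of_int s * real_of_int m"
    using herr(2) mpos unfolding s_def x_def yy_def by (simp add: field_simps)
  have "real_of_int (- s * m) \<le> real_of_int (2 * (x - yy))" using e1 by simp
  hence i1: "- s * m \<le> 2 * (x - yy)" by (simp only: of_int_le_iff)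
  have "real_of_int (2 * (x - yy)) < real_of_int (s * m)" using e2 by simp
  hence i2: "2 * (x - yy) < s * m" by (simp only: of_int_less_iff)
  have "0 < s * m" using i1 i2 by linarith
  hence sp: "s > 0" using hm by (simp add: zero_less_mult_iff)
  have yd: "yy = m * d" using y unfolding yy_def .
  have c1: "(real_of_int x / real_of_int m \<ge> real_of_int s / 2) = (2 * x \<ge> s * m)"
  proof -
    have "(real_of_int x / real_of_int m \<ge> real_of_int s / 2) = (2 * real_of_int x \<ge> real_of_int s * real_of_int m)"
      using mpos by (simp add: field_simps)
    also have "\<dots> = (2 * x \<ge> s * m)" using of_int_le_iff[of "s*m" "2*x", where 'a=real] by simp
    finally show ?thesis .
  qed
  have c2: "(real_of_int x / real_of_int m < - real_of_int s / 2) = (2 * x < - s * m)"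
  proof -
    have "(real_of_int x / real_of_int m < - real_of_int s / 2) = (2 * real_of_int x < - real_of_int s * real_of_int m)"
      using mpos by (simp add: field_simps)
    also have "\<dots> = (2 * x < - s * m)" using of_int_less_iff[of "2*x" "- s*m", where 'a=real] by simp
    finally show ?thesis .
  qed
  have c3: "(- real_of_int s / 2 \<le> real_of_int x / real_of_int m) = (- s * m \<le> 2 * x)"
  proof -
    have "(- real_of_int s / 2 \<le> real_of_int x / real_of_int m) = (- real_of_int s * real_of_int m \<le> 2 * real_of_int x)"
      using mpos by (simp add: field_simps)
    also have "\<dots> = (- s * m \<le> 2 * x)" using of_int_le_iff[of "- s*m" "2*x", where 'a=real] by simp
    finally show ?thesis .
  qed
  have c4: "(real_of_int x / real_of_int m < real_of_int s / 2) = (2 * x < s * m)"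
  proof -
    have "(real_of_int x / real_of_int m < real_of_int s / 2) = (2 * real_of_int x < real_of_int s * real_of_int m)"
      using mpos by (simp add: field_simps)
    also have "\<dots> = (2 * x < s * m)" using of_int_less_iff[of "2*x" "s*m", where 'a=real] by simp
    finally show ?thesis .
  qed
  have main: "(2 * x \<ge> s * m \<longrightarrow> yy > 0) \<and> (2 * x < - s * m \<longrightarrow> yy < 0)
     \<and> (- s * m \<le> 2 * x \<and> 2 * x < s * m \<longrightarrow> yy = 0)"
  proof -
    consider "d = 0" | "d \<ge> s" | "d \<le> - s" using dk by linarith
    thus ?thesis
    proof cases
      case 1 thus ?thesis using yd i1 i2 by simp
    next
      case 2
      have "m * d \<ge> m * s" using 2 hm by (simp add: mult_left_mono)
      moreover have "m * s > 0" using sp hm by simp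
      ultimately show ?thesis using yd i1 i2 by (simp add: algebra_simps)
    next
      case 3
      have "m * d \<le> m * (- s)" using 3 hm by (intro mult_left_mono) auto
      moreover have "m * s > 0" using sp hm by simp
      ultimately show ?thesis using yd i1 i2 by (simp add: algebra_simps)
    qed
  qed
  show ?thesis using main c1 c2 c3 c4 unfolding x_def yy_def s_def by simp
qed

end
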